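(* Let $\mathfrak{n}$ be a real nilpotent Lie algebra with a bi-invariant complex structure $J$. If there exists an inner product on $\mathfrak{n}$ that is Hermitian with respect to $J$ and pluriclosed, then $\mathfrak{n}$ is abelian.
   Context: A complex structure on a real Lie algebra $\mathfrak{g}$ is a linear map $J$ with $J^2=-I$ and $N_J(x,y)=[x,y]+J([Jx,y]+[x,Jy])-[Jx,Jy]=0$ for all $x,y$; it is bi-invariant if $J[x,y]=[x,Jy]$ for all $x,y$. An inner product $\langle\cdot,\cdot\rangle$ is Hermitian if $\langle Jx,Jy\rangle=\langle x,y\rangle$. Its torsion 3-form is $c(x,y,z)=-\langle[Jx,Jy],z\rangle-\langle[Jy,Jz],x\rangle-\langle[Jz,Jx],y\rangle$, and $\langle\cdot,\cdot\rangle$ is pluriclosed if $dc=0$, where $d$ is the Chevalley–Eilenberg differential on $\Lambda^*\mathfrak{g}^*$. *)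

theory Defs
  imports "HOL-Analysis.Analysis"
begin

text \<open>A finite-dimensional real Lie algebra is modelled as a finite-dimensional real
vector space (a type of class euclidean_space; its built-in inner product is NOT used)
together with a bracket br.\<close>

definition lie_algebra :: "('a::euclidean_space \<Rightarrow> 'a \<Rightarrow> 'a) \<Rightarrow> bool" where
  "lie_algebra br \<longleftrightarrow> bilinear br \<and> (\<forall>x. br x x = 0) \<and>
     (\<forall>x y z. br x (br y z) + br y (br z x) + br z (br x y) = 0)"

fun lower_central :: "('a::euclidean_space \<Rightarrow> 'a \<Rightarrow> 'a) \<Rightarrow> nat \<Rightarrow> 'a set" where
  "lower_central br 0 = UNIV"
| "lower_central br (Suc k) = span {br x y | x y. y \<in> lower_central br k}"

definition nilpotent_lie :: "('a::euclidean_space \<Rightarrow> 'a \<Rightarrow> 'a) \<Rightarrow> bool" where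
  "nilpotent_lie br \<longleftrightarrow> (\<exists>k. lower_central br k = {0})"

definition abelian_lie :: "('a::euclidean_space \<Rightarrow> 'a \<Rightarrow> 'a) \<Rightarrow> bool" where
  "abelian_lie br \<longleftrightarrow> (\<forall>x y. br x y = 0)"

definition complex_structure ::
  "('a::euclidean_space \<Rightarrow> 'a \<Rightarrow> 'a) \<Rightarrow> ('a \<Rightarrow> 'a) \<Rightarrow> bool" where
  "complex_structure br J \<longleftrightarrow> linear J \<and> (\<forall>x. J (J x) = - x) \<and>
     (\<forall>x y. br x y + J (br (J x) y + br x (J y)) - br (J x) (J y) = 0)"

definition bi_invariant ::
  "('a::euclidean_space \<Rightarrow> 'a \<Rightarrow> 'a) \<Rightarrow> ('a \<Rightarrow> 'a) \<Rightarrow> bool" where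
  "bi_invariant br J \<longleftrightarrow> (\<forall>x y. J (br x y) = br x (J y))"

definition inner_product :: "('a::euclidean_space \<Rightarrow> 'a \<Rightarrow> real) \<Rightarrow> bool" where
  "inner_product g \<longleftrightarrow> bilinear g \<and> (\<forall>x y. g x y = g y x) \<and> (\<forall>x. x \<noteq> 0 \<longrightarrow> g x x > 0)"

definition hermitian :: "('a::euclidean_space \<Rightarrow> 'a \<Rightarrow> real) \<Rightarrow> ('a \<Rightarrow> 'a) \<Rightarrow> bool" where
  "hermitian g J \<longleftrightarrow> (\<forall>x y. g (J x) (J y) = g x y)"

definition torsion3 ::
  "('a::euclidean_space \<Rightarrow> 'a \<Rightarrow> 'a) \<Rightarrow> ('a \<Rightarrow> 'a) \<Rightarrow> ('a \<Rightarrow> 'a \<Rightarrow> real) \<Rightarrow> 'a \<Rightarrow> 'a \<Rightarrow> 'a \<Rightarrow> real" where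
  "torsion3 br J g x y z = - g (br (J x) (J y)) z - g (br (J y) (J z)) x - g (br (J z) (J x)) y"

text \<open>Chevalley--Eilenberg differential of a 3-form (trivial coefficients):
  (d c)(x0,x1,x2,x3) = sum over i<j of (-1)^(i+j) c([xi,xj], ..., omitting xi, xj, ...).\<close>
definition ce_d3 ::
  "('a::euclidean_space \<Rightarrow> 'a \<Rightarrow> 'a) \<Rightarrow> ('a \<Rightarrow> 'a \<Rightarrow> 'a \<Rightarrow> real) \<Rightarrow> 'a \<Rightarrow> 'a \<Rightarrow> 'a \<Rightarrow> 'a \<Rightarrow> real" where
  "ce_d3 br c x0 x1 x2 x3 =
     - c (br x0 x1) x2 x3 + c (br x0 x2) x1 x3 - c (br x0 x3) x1 x2
     - c (br x1 x2) x0 x3 + c (br x1 x3) x0 x2 - c (br x2 x3) x0 x1"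

definition pluriclosed ::
  "('a::euclidean_space \<Rightarrow> 'a \<Rightarrow> 'a) \<Rightarrow> ('a \<Rightarrow> 'a) \<Rightarrow> ('a \<Rightarrow> 'a \<Rightarrow> real) \<Rightarrow> bool" where
  "pluriclosed br J g \<longleftrightarrow> (\<forall>x0 x1 x2 x3. ce_d3 br (torsion3 br J g) x0 x1 x2 x3 = 0)"

end

theory Submission
  imports Defs
begin

lemma lc_J:
  assumes lin: "linear J" and bi: "bi_invariant br J"
  shows "v \<in> lower_central br k \<Longrightarrow> J v \<in> lower_central br k"
proof (induction k arbitrary: v)
  case 0
  then show ?case by simp
next
  case (Suc k)
  let ?S = "{br x y | x y. y \<in> lower_central br k}"
  have "J v \<in> J ` span ?S" using Suc.prems by simp
  also have "\<dots> = span (J ` ?S)" using lin by (simp add: linear_span_image)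
  also have "\<dots> \<subseteq> span ?S"
  proof (rule span_mono, rule subsetI)
    fix u assume "u \<in> J ` ?S"
    then obtain x y where "y \<in> lower_central br k" "u = J (br x y)" by blast
    then show "u \<in> ?S" using Suc.IH bi unfolding bi_invariant_def by blast
  qed
  finally show ?case by simp
qed

lemma step:
  fixes br :: "'a::euclidean_space \<Rightarrow> 'a \<Rightarrow> 'a" and J :: "'a \<Rightarrow> 'a"
  assumes la: "lie_algebra br" and cs: "complex_structure br J" and bi: "bi_invariant br J"
    and ip: "inner_product g" and he: "hermitian g J" and pc: "pluriclosed br J g"
    and z: "lower_central br (Suc (Suc m)) = {0}"
  shows "lower_central br (Suc m) = {0}"
proof -
  have bl: "bilinear br" and aa: "\<And>a. br a a = 0" using la unfolding lie_algebra_def by auto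
  have linJ: "linear J" and JJ: "\<And>a. J (J a) = - a" using cs unfolding complex_structure_def by auto
  have bg: "bilinear g" and gpos: "\<And>a. a \<noteq> 0 \<Longrightarrow> g a a > 0" using ip unfolding inner_product_def by auto
  have gJ: "\<And>a b. g (J a) (J b) = g a b" using he unfolding hermitian_def by auto
  have anti: "\<And>a b. br b a = - br a b"
  proof -
    fix a b
    have "0 = br (a+b) (a+b)" using aa by simp
    also have "\<dots> = br a a + br b a + (br a b + br b b)" by (simp only: bilinear_ladd[OF bl] bilinear_radd[OF bl])
    also have "\<dots> = br a b + br b a" by (simp add: aa add.commute)
    finally show "br b a = - br a b" by (simp add: eq_neg_iff_add_eq_0 add.commute)
  qed
  have Jr: "\<And>a b. br a (J b) = J (br a b)" using bi unfolding bi_invariant_def by simp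
  have Jl: "\<And>a b. br (J a) b = J (br a b)"
  proof -
    fix a b
    have "br (J a) b = - br b (J a)" by (rule anti)
    also have "\<dots> = - J (br b a)" by (simp add: Jr)
    also have "\<dots> = J (br a b)" using anti[of b a] linJ by (simp add: linear_neg)
    finally show "br (J a) b = J (br a b)" .
  qed
  have cen: "\<And>v a. v \<in> lower_central br (Suc m) \<Longrightarrow> br a v = 0 \<and> br v a = 0"
  proof -
    fix v a assume v: "v \<in> lower_central br (Suc m)"
    have "br a v \<in> lower_central br (Suc (Suc m))"
      using v by (auto intro: span_base)
    then have "br a v = 0" using z by simp
    then show "br a v = 0 \<and> br v a = 0" using anti[of v a] by simp
  qed
  have w0: "br x y = 0" if y: "y \<in> lower_central br m" for x y
  proof -
    define w where "w = br x y"
    have wC: "w \<in> lower_central br (Suc m)" unfolding w_def using y by (auto intro: span_base)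
    have JwC: "J w \<in> lower_central br (Suc m)" by (rule lc_J[OF linJ bi wC])
    have c1: "\<And>a. br w a = 0" "\<And>a. br a w = 0" "\<And>a. br (J w) a = 0" "\<And>a. br a (J w) = 0"
      using cen[OF wC] cen[OF JwC] by auto
    have yx: "br y x = - w" unfolding w_def by (rule anti)
    have d: "ce_d3 br (torsion3 br J g) x y (J x) (J y) = 0" using pc unfolding pluriclosed_def by blast
    have Jn: "\<And>a. J (- a) = - J a" and J0: "J 0 = 0" using linJ by (auto simp: linear_neg linear_0)
    have JJb: "\<And>a b. br (J a) (J b) = - br a b" by (simp add: Jl Jr JJ)
    have T: "\<And>a b c. torsion3 br J g a b c = g (br a b) c + g (br b c) a + g (br c a) b"
      unfolding torsion3_def JJb using bg by (simp add: bilinear_lneg)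
    have Tc: "torsion3 br J g v b c = g (br b c) v" if "v \<in> lower_central br (Suc m)" for v b c
      using cen[OF that] bg by (simp add: T bilinear_lzero bilinear_rzero)
    have sub: "subspace (lower_central br (Suc m))" by (simp add: subspace_span)
    have nwC: "- w \<in> lower_central br (Suc m)" "- J w \<in> lower_central br (Suc m)"
      "0 \<in> lower_central br (Suc m)"
      using wC JwC sub by (auto simp: subspace_neg subspace_0)
    have b1: "br x (J x) = 0" "br y (J y) = 0" using Jr aa Jn J0 by simp_all
    have b2: "br x (J y) = J w" "br y (J x) = - J w" "br (J x) (J y) = - w"
      using Jr JJb yx Jn unfolding w_def by simp_all
    have gn: "\<And>a b. g a (- b) = - g a b" using bg by (simp add: bilinear_rneg)
    have "ce_d3 br (torsion3 br J g) x y (J x) (J y) =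
       - torsion3 br J g w (J x) (J y) + torsion3 br J g 0 y (J y)
       - torsion3 br J g (J w) y (J x) - torsion3 br J g (- J w) x (J y)
       + torsion3 br J g 0 x (J x) - torsion3 br J g (- w) x y"
      unfolding ce_d3_def b1 b2 w_def[symmetric] by simp
    also have "\<dots> = - g (br (J x) (J y)) w - g (br y (J x)) (J w) + g (br x (J y)) (J w) + g (br x y) w"
      using Tc wC JwC nwC gn b1 bg by (simp add: bilinear_rzero)
    also have "\<dots> = 4 * g w w" using b2 gn gJ bg unfolding w_def[symmetric] by (simp add: bilinear_lneg)
    finally have "ce_d3 br (torsion3 br J g) x y (J x) (J y) = 4 * g w w" .
    then have "g w w = 0" using d by simp
    then show ?thesis using gpos unfolding w_def by force
  qed
  have S0: "{br x y | x y. y \<in> lower_central br m} \<subseteq> {0}" using w0 by auto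
  have "lower_central br (Suc m) \<subseteq> span {0}" using span_mono[OF S0] by simp
  moreover have "(0::'a) \<in> lower_central br (Suc m)" by (simp add: span_zero)
  ultimately show ?thesis by auto
qed

theorem mainTheorem15:
  fixes br :: "'a::euclidean_space \<Rightarrow> 'a \<Rightarrow> 'a" and J :: "'a \<Rightarrow> 'a"
  assumes "lie_algebra br" and "nilpotent_lie br"
    and "complex_structure br J" and "bi_invariant br J"
    and "\<exists>g. inner_product g \<and> hermitian g J \<and> pluriclosed br J g"
  shows "abelian_lie br"
proof -
  obtain g where g: "inner_product g" "hermitian g J" "pluriclosed br J g" using assms(5) by blast
  obtain k where k: "lower_central br k = {0}" using assms(2) unfolding nilpotent_lie_def by blast
  have down: "lower_central br (Suc (m+i)) = {0} \<Longrightarrow> lower_central br (Suc m) = {0}" for m i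
  proof (induction i)
    case 0 then show ?case by simp
  next
    case (Suc i)
    have "lower_central br (Suc (Suc (m+i))) = {0}" using Suc.prems by simp
    then have "lower_central br (Suc (m+i)) = {0}"
      by (rule step[OF assms(1) assms(3) assms(4) g])
    then show ?case by (rule Suc.IH)
  qed
  have C1: "lower_central br 1 = {0}"
  proof (cases k)
    case 0
    then have "\<And>v::'a. v = 0" using k by auto
    moreover have "(0::'a) \<in> lower_central br 1" by (simp add: span_zero)
    ultimately show ?thesis by blast
  next
    case (Suc n)
    then show ?thesis using down[of 0 n] k by simp
  qed
  show ?thesis unfolding abelian_lie_def
  proof (intro allI)
    fix x y :: 'a
    have "br x y \<in> lower_central br 1" by (auto intro: span_base)
    then show "br x y = 0" using C1 by simp
  qed
qed

end
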